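(* Let $(R,\mathfrak{m})$ be a local ring with residue field $k$, let $S=\mathrm{Spec}\,R$, let $A$ be a finite abelian group and let $H\hookrightarrow D_S(A)$ be a closed subgroup scheme, with $R[H]=R[A]/I$ for a Hopf ideal $I$. If the order of $A$ is invertible in $R$, then the quotient map $R[H]\to R[H]\otimes_R k$ induces a bijection on group-like elements.
   Context: $D_S(A)=\mathrm{Spec}\,R[A]$. An element $g$ of a Hopf algebra is group-like if $\Delta(g)=g\otimes g$ and $\varepsilon(g)=1$. $H$ need not be flat over $R$. *)

theory Defs
  imports Main
begin

text \<open>Group algebra R[A] of a finite abelian group A (type 'a, written additively)
over a commutative ring R (type 'r): elements are functions 'a \<Rightarrow> 'r
(coefficient of each group element). R[A]\<otimes>R[A] = R[A\<times>A] is represented by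
functions 'a \<times> 'a \<Rightarrow> 'r.\<close>

definition conv :: "('a::ab_group_add \<Rightarrow> 'r::comm_ring_1) \<Rightarrow> ('a \<Rightarrow> 'r) \<Rightarrow> ('a \<Rightarrow> 'r)" where
  "conv f g = (\<lambda>c. \<Sum>a\<in>UNIV. f a * g (c - a))"

definition gtensor :: "('a \<Rightarrow> 'r::comm_ring_1) \<Rightarrow> ('a \<Rightarrow> 'r) \<Rightarrow> ('a \<times> 'a \<Rightarrow> 'r)" where
  "gtensor x y = (\<lambda>(a, b). x a * y b)"

definition comult :: "('a \<Rightarrow> 'r::comm_ring_1) \<Rightarrow> ('a \<times> 'a \<Rightarrow> 'r)" where
  "comult f = (\<lambda>(a, b). if a = b then f a else 0)"

definition counit :: "('a \<Rightarrow> 'r::comm_ring_1) \<Rightarrow> 'r" where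
  "counit f = (\<Sum>a\<in>UNIV. f a)"

definition antipode :: "('a::ab_group_add \<Rightarrow> 'r::comm_ring_1) \<Rightarrow> ('a \<Rightarrow> 'r)" where
  "antipode f = (\<lambda>a. f (- a))"

text \<open>Image of I\<otimes>R[A] + R[A]\<otimes>I in R[A]\<otimes>R[A]: the additive closure of
elementary tensors with one factor in I.  R[A\<times>A] modulo it is R[H]\<otimes>R[H].\<close>
inductive_set tensor_ideal :: "('a \<Rightarrow> 'r::comm_ring_1) set \<Rightarrow> ('a \<times> 'a \<Rightarrow> 'r) set"
  for I where
  zero: "(\<lambda>_. 0) \<in> tensor_ideal I"
| left: "x \<in> I \<Longrightarrow> t \<in> tensor_ideal I \<Longrightarrow> (\<lambda>p. gtensor x y p + t p) \<in> tensor_ideal I"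
| right: "y \<in> I \<Longrightarrow> t \<in> tensor_ideal I \<Longrightarrow> (\<lambda>p. gtensor x y p + t p) \<in> tensor_ideal I"

definition is_ideal :: "('a::ab_group_add \<Rightarrow> 'r::comm_ring_1) set \<Rightarrow> bool" where
  "is_ideal I \<longleftrightarrow> (\<lambda>_. 0) \<in> I \<and> (\<forall>x\<in>I. \<forall>y\<in>I. (\<lambda>a. x a + y a) \<in> I)
      \<and> (\<forall>x\<in>I. \<forall>f. conv f x \<in> I)"

definition hopf_ideal :: "('a::ab_group_add \<Rightarrow> 'r::comm_ring_1) set \<Rightarrow> bool" where
  "hopf_ideal I \<longleftrightarrow> is_ideal I \<and> (\<forall>x\<in>I. comult x \<in> tensor_ideal I)
      \<and> (\<forall>x\<in>I. counit x = 0) \<and> (\<forall>x\<in>I. antipode x \<in> I)"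

text \<open>Local rings: nonunits form an ideal (the maximal ideal m).\<close>
definition maxideal :: "'r::comm_ring_1 set" where
  "maxideal = {x. \<not> x dvd 1}"

definition is_local :: "'r::comm_ring_1 itself \<Rightarrow> bool" where
  "is_local _ \<longleftrightarrow> (0::'r) \<noteq> 1 \<and> (\<forall>x\<in>(maxideal::'r set). \<forall>y\<in>maxideal. x + y \<in> maxideal)"

text \<open>Elements of R[H] = R[A]/I as cosets.\<close>
definition cls :: "('a \<Rightarrow> 'r::comm_ring_1) set \<Rightarrow> ('a \<Rightarrow> 'r) \<Rightarrow> ('a \<Rightarrow> 'r) set" where
  "cls I f = {g. (\<lambda>a. g a - f a) \<in> I}"

text \<open>I + m R[A], so that R[A]/(I + m R[A]) = R[H] \<otimes>_R k.\<close>
definition ext_ideal :: "('a \<Rightarrow> 'r::comm_ring_1) set \<Rightarrow> ('a \<Rightarrow> 'r) set" where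
  "ext_ideal I = {(\<lambda>a. x a + y a) | x y. x \<in> I \<and> (\<forall>a. y a \<in> maxideal)}"

definition grouplikes_H :: "('a \<Rightarrow> 'r::comm_ring_1) set \<Rightarrow> ('a \<Rightarrow> 'r) set set" where
  "grouplikes_H I = {cls I f | f. counit f = 1
      \<and> (\<lambda>p. comult f p - gtensor f f p) \<in> tensor_ideal I}"

text \<open>Group-like elements of the k-Hopf algebra R[H] \<otimes>_R k; its tensor square
over k is R[A\<times>A]/(tensor_ideal I + m R[A\<times>A]).\<close>
definition grouplikes_Hk :: "('a \<Rightarrow> 'r::comm_ring_1) set \<Rightarrow> ('a \<Rightarrow> 'r) set set" where
  "grouplikes_Hk I = {cls (ext_ideal I) f | f. counit f - 1 \<in> maxideal
      \<and> (\<exists>t u. t \<in> tensor_ideal I \<and> (\<forall>p. u p \<in> maxideal)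
              \<and> (\<forall>p. comult f p - gtensor f f p = t p + u p))}"

definition reduce :: "('a \<Rightarrow> 'r::comm_ring_1) set \<Rightarrow> ('a \<Rightarrow> 'r) set \<Rightarrow> ('a \<Rightarrow> 'r) set" where
  "reduce I C = {g. \<exists>f\<in>C. (\<lambda>a. g a - f a) \<in> ext_ideal I}"

end

theory Submission
  imports Defs
begin

definition dl :: "'a \<Rightarrow> 'a \<Rightarrow> 'r::comm_ring_1" where
  "dl c = (\<lambda>a. if a = c then 1 else 0)"

definition submod :: "('b \<Rightarrow> 'r::comm_ring_1) set \<Rightarrow> bool" where
  "submod V \<longleftrightarrow> (\<lambda>_. 0) \<in> V \<and> (\<forall>x\<in>V. \<forall>y\<in>V. (\<lambda>c. x c + y c) \<in> V)
     \<and> (\<forall>x\<in>V. \<forall>r. (\<lambda>c. r * x c) \<in> V)"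

lemma submod_zero: "submod V \<Longrightarrow> (\<lambda>_. 0) \<in> V"
  by (simp add: submod_def)
lemma submod_add: "submod V \<Longrightarrow> x \<in> V \<Longrightarrow> y \<in> V \<Longrightarrow> (\<lambda>c. x c + y c) \<in> V"
  by (simp add: submod_def)
lemma submod_smul: "submod V \<Longrightarrow> x \<in> V \<Longrightarrow> (\<lambda>c. r * x c) \<in> V"
  by (simp add: submod_def)
lemma submod_neg: "submod V \<Longrightarrow> x \<in> V \<Longrightarrow> (\<lambda>c. - x c) \<in> V"
  using submod_smul[of V x "-1"] by simp
lemma submod_diff: "submod V \<Longrightarrow> x \<in> V \<Longrightarrow> y \<in> V \<Longrightarrow> (\<lambda>c. x c - y c) \<in> V"
  using submod_add[of V x "\<lambda>c. - y c"] submod_neg[of V y] by simp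
lemma submod_eq: "x \<in> V \<Longrightarrow> (\<And>c. y c = x c) \<Longrightarrow> y \<in> V"
proof -
  assume "x \<in> V" "\<And>c. y c = x c"
  then have "y = x" by auto
  then show ?thesis using \<open>x \<in> V\<close> by simp
qed
lemma submod_sum:
  assumes "submod V" "finite S" "\<And>i. i \<in> S \<Longrightarrow> x i \<in> V"
  shows "(\<lambda>c. \<Sum>i\<in>S. r i * x i c) \<in> V"
  using assms(2,3)
proof (induction S rule: finite_induct)
  case empty
  then show ?case using submod_zero[OF assms(1)] by simp
next
  case (insert s S)
  have "(\<lambda>c. r s * x s c + (\<Sum>i\<in>S. r i * x i c)) \<in> V"
    using submod_add[OF assms(1) submod_smul[OF assms(1), of "x s" "r s"]] insert by auto
  then show ?case using insert by simp
qed

lemma submod_sum':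
  fixes V :: "('b \<Rightarrow> 'r::comm_ring_1) set"
  assumes "submod V" "finite S" "\<And>i. i \<in> S \<Longrightarrow> x i \<in> V"
  shows "(\<lambda>c. \<Sum>i\<in>S. x i c) \<in> V"
  using submod_sum[OF assms, where r="\<lambda>_. 1"] by simp

lemma m_mult: "x \<in> maxideal \<Longrightarrow> (y * x :: 'r::comm_ring_1) \<in> maxideal"
  by (auto simp: maxideal_def dest: dvd_mult_right)
lemma m_mult': "x \<in> maxideal \<Longrightarrow> (x * y :: 'r::comm_ring_1) \<in> maxideal"
  by (auto simp: maxideal_def dest: dvd_mult_left)
lemma m_neg: "x \<in> maxideal \<Longrightarrow> (- x :: 'r::comm_ring_1) \<in> maxideal"
  by (auto simp: maxideal_def)
lemma m_add: "is_local TYPE('r::comm_ring_1) \<Longrightarrow> x \<in> maxideal \<Longrightarrow> y \<in> maxideal \<Longrightarrow> (x + y :: 'r) \<in> maxideal"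
  by (simp add: is_local_def)
lemma m_zero: "is_local TYPE('r::comm_ring_1) \<Longrightarrow> (0::'r) \<in> maxideal"
  by (simp add: is_local_def maxideal_def)
lemma m_one: "(1::'r::comm_ring_1) \<notin> maxideal"
  by (simp add: maxideal_def)
lemma m_diff: "is_local TYPE('r::comm_ring_1) \<Longrightarrow> x \<in> maxideal \<Longrightarrow> y \<in> maxideal \<Longrightarrow> (x - y :: 'r) \<in> maxideal"
  using m_add[of x "-y"] m_neg[of y] by simp
lemma m_sum: "is_local TYPE('r::comm_ring_1) \<Longrightarrow> (\<And>i. i \<in> S \<Longrightarrow> f i \<in> maxideal) \<Longrightarrow> (sum f S :: 'r) \<in> maxideal"
proof (induction S rule: infinite_finite_induct)
  case (infinite A) then show ?case by (simp add: m_zero)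
next
  case empty then show ?case by (simp add: m_zero)
next
  case (insert x F) then show ?case by (simp add: m_add)
qed
lemma m_unit: "(x::'r::comm_ring_1) \<notin> maxideal \<Longrightarrow> \<exists>r. r * x = 1"
  by (auto simp: maxideal_def elim!: dvdE) (metis mult.commute)
lemma m_one_minus: "is_local TYPE('r::comm_ring_1) \<Longrightarrow> (x::'r) \<in> maxideal \<Longrightarrow> 1 - x \<notin> maxideal"
  using m_add[of x "1 - x"] m_one by auto

definition mv :: "('b \<Rightarrow> 'r::comm_ring_1) set" where
  "mv = {y. \<forall>a. y a \<in> maxideal}"

lemma submod_mv: "is_local TYPE('r::comm_ring_1) \<Longrightarrow> submod (mv :: ('b \<Rightarrow> 'r) set)"
  by (auto simp: submod_def mv_def m_zero m_add m_mult)

lemma conv_comm: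
  fixes f g :: "'a::{finite,ab_group_add} \<Rightarrow> 'r::comm_ring_1"
  shows "conv f g = conv g f"
proof (rule ext)
  fix c
  show "conv f g c = conv g f c"
    unfolding conv_def
    by (rule sum.reindex_bij_witness[of _ "\<lambda>b. c - b" "\<lambda>a. c - a"]) (auto simp: mult.commute)
qed

lemma conv_dl:
  fixes f :: "'a::{finite,ab_group_add} \<Rightarrow> 'r::comm_ring_1"
  shows "conv f (dl d) = (\<lambda>c. f (c - d))"
proof (rule ext)
  fix c
  have "conv f (dl d) c = (\<Sum>a\<in>UNIV. if a = c - d then f a else 0)"
    unfolding conv_def dl_def by (rule sum.cong) (auto simp: algebra_simps)
  then show "conv f (dl d) c = f (c - d)" by simp
qed

lemma conv_dl_left:
  fixes f :: "'a::{finite,ab_group_add} \<Rightarrow> 'r::comm_ring_1"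
  shows "conv (dl d) f = (\<lambda>c. f (c - d))"
  using conv_dl conv_comm by metis

lemma conv_add_right: "conv f (\<lambda>c. x c + y c) = (\<lambda>c. conv f x c + conv f y c)"
  by (simp add: conv_def algebra_simps sum.distrib)
lemma conv_diff_right: "conv f (\<lambda>c. x c - y c) = (\<lambda>c. conv f x c - conv f y c)"
  by (simp add: conv_def algebra_simps sum_subtractf)
lemma conv_smul_right: "conv f (\<lambda>c. r * x c) = (\<lambda>c. r * conv f x c)"
  by (simp add: conv_def algebra_simps sum_distrib_left)
lemma conv_add_left: "conv (\<lambda>c. x c + y c) f = (\<lambda>c. conv x f c + conv y f c)"
  by (simp add: conv_def algebra_simps sum.distrib)
lemma conv_diff_left: "conv (\<lambda>c. x c - y c) f = (\<lambda>c. conv x f c - conv y f c)"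
  by (simp add: conv_def algebra_simps sum_subtractf)
lemma conv_smul_left: "conv (\<lambda>c. r * x c) f = (\<lambda>c. r * conv x f c)"
  by (simp add: conv_def algebra_simps sum_distrib_left)
lemma conv_sum_right: "conv f (\<lambda>c. \<Sum>k\<in>S. x k c) = (\<lambda>c. \<Sum>k\<in>S. conv f (x k) c)"
  by (simp add: conv_def sum_distrib_left sum.swap[of _ S])

context
  fixes I :: "('a::{finite, ab_group_add} \<Rightarrow> 'r::comm_ring_1) set"
  assumes idl: "is_ideal I"
begin

lemma I_conv: "x \<in> I \<Longrightarrow> conv f x \<in> I"
  using idl by (simp add: is_ideal_def)
lemma I_conv': "x \<in> I \<Longrightarrow> conv x f \<in> I"
  using I_conv conv_comm by metis

lemma submod_I: "submod I"
proof -
  have sm: "(\<lambda>c. r * x c) \<in> I" if "x \<in> I" for x r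
  proof -
    have "conv (\<lambda>a. r * dl 0 a) x = (\<lambda>c. r * x c)"
      using conv_smul_left[of r "dl 0" x] conv_dl_left[of 0 x] by simp
    then show ?thesis using I_conv[OF that, of "\<lambda>a. r * dl 0 a"] by simp
  qed
  then show ?thesis using idl by (auto simp: submod_def is_ideal_def)
qed

lemma I_shift: "x \<in> I \<Longrightarrow> (\<lambda>a. x (a + d)) \<in> I"
  using I_conv'[of x "dl (-d)"] conv_dl[of x "-d"] by simp

end

context
  fixes I :: "('a::{finite, ab_group_add} \<Rightarrow> 'r::comm_ring_1) set"
  assumes loc: "is_local TYPE('r)" and hopf: "hopf_ideal I"
begin

lemma idl: "is_ideal I" using hopf by (simp add: hopf_ideal_def)
lemma smI: "submod I" using submod_I[OF idl] .
lemma smM: "submod (mv :: ('b \<Rightarrow> 'r) set)" using submod_mv[OF loc] .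
lemma I_comult: "x \<in> I \<Longrightarrow> comult x \<in> tensor_ideal I"
  using hopf by (simp add: hopf_ideal_def)
lemma I_counit: "x \<in> I \<Longrightarrow> counit x = 0"
  using hopf by (simp add: hopf_ideal_def)

lemma K_iff: "x \<in> ext_ideal I \<longleftrightarrow> (\<exists>i y. i \<in> I \<and> y \<in> mv \<and> x = (\<lambda>a. i a + y a))"
  by (auto simp: ext_ideal_def mv_def)

lemma submod_K: "submod (ext_ideal I)"
  unfolding submod_def
proof (intro conjI ballI allI)
  show "(\<lambda>_. 0) \<in> ext_ideal I"
    unfolding K_iff using submod_zero[OF smI] submod_zero[OF smM] by force
next
  fix x y assume "x \<in> ext_ideal I" "y \<in> ext_ideal I"
  then obtain i1 y1 i2 y2 where h: "i1 \<in> I" "y1 \<in> mv" "x = (\<lambda>a. i1 a + y1 a)"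
     "i2 \<in> I" "y2 \<in> mv" "y = (\<lambda>a. i2 a + y2 a)" unfolding K_iff by blast
  show "(\<lambda>c. x c + y c) \<in> ext_ideal I" unfolding K_iff
    apply (rule exI[of _ "\<lambda>c. i1 c + i2 c"], rule exI[of _ "\<lambda>c. y1 c + y2 c"])
    using h submod_add[OF smI, of i1 i2] submod_add[OF smM, of y1 y2] by (auto simp: algebra_simps)
next
  fix x r assume "x \<in> ext_ideal I"
  then obtain i1 y1 where h: "i1 \<in> I" "y1 \<in> mv" "x = (\<lambda>a. i1 a + y1 a)" unfolding K_iff by blast
  show "(\<lambda>c. r * x c) \<in> ext_ideal I" unfolding K_iff
    apply (rule exI[of _ "\<lambda>c. r * i1 c"], rule exI[of _ "\<lambda>c. r * y1 c"])
    using h submod_smul[OF smI, of i1 r] submod_smul[OF smM, of y1 r] by (auto simp: algebra_simps)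
qed

lemma I_K: "x \<in> I \<Longrightarrow> x \<in> ext_ideal I"
  unfolding K_iff using submod_zero[OF smM] by force
lemma mv_K: "y \<in> mv \<Longrightarrow> y \<in> ext_ideal I"
  unfolding K_iff using submod_zero[OF smI] by force

lemma mv_conv: "(y :: 'a \<Rightarrow> 'r) \<in> mv \<Longrightarrow> conv f y \<in> mv"
  unfolding mv_def conv_def
  apply (simp, intro allI)
  apply (rule m_sum[OF loc])
  apply (simp add: m_mult)
  done

lemma K_conv: "x \<in> ext_ideal I \<Longrightarrow> conv f x \<in> ext_ideal I"
proof -
  assume "x \<in> ext_ideal I"
  then obtain i1 y1 where h: "i1 \<in> I" "y1 \<in> mv" "x = (\<lambda>a. i1 a + y1 a)" unfolding K_iff by blast
  have "conv f x = (\<lambda>c. conv f i1 c + conv f y1 c)" using h conv_add_right by simp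
  then show ?thesis unfolding K_iff using I_conv[OF idl h(1)] mv_conv[OF h(2)] by blast
qed

lemma K_shift: "x \<in> ext_ideal I \<Longrightarrow> (\<lambda>a. x (a + d)) \<in> ext_ideal I"
  using K_conv[of x "dl (-d)"] conv_dl[of x "-d"] conv_comm[of x "dl (-d)"] by simp

lemma T_add: "F \<in> tensor_ideal I \<Longrightarrow> G \<in> tensor_ideal I \<Longrightarrow> (\<lambda>p. F p + G p) \<in> tensor_ideal I"
proof (induction F rule: tensor_ideal.induct)
  case zero then show ?case by simp
next
  case (left x t y)
  then have "(\<lambda>p. gtensor x y p + (t p + G p)) \<in> tensor_ideal I"
    using tensor_ideal.left by blast
  then show ?case by (simp add: add.assoc)
next
  case (right y t x)
  then have "(\<lambda>p. gtensor x y p + (t p + G p)) \<in> tensor_ideal I"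
    using tensor_ideal.right by blast
  then show ?case by (simp add: add.assoc)
qed

lemma T_smul: "F \<in> tensor_ideal I \<Longrightarrow> (\<lambda>p. r * F p) \<in> tensor_ideal I"
proof (induction F rule: tensor_ideal.induct)
  case zero then show ?case using tensor_ideal.zero by simp
next
  case (left x t y)
  have "(\<lambda>c. r * x c) \<in> I" using submod_smul[OF smI left(1)] .
  then have "(\<lambda>p. gtensor (\<lambda>c. r * x c) y p + r * t p) \<in> tensor_ideal I"
    using tensor_ideal.left left by blast
  then show ?case by (simp add: gtensor_def distrib_left case_prod_beta algebra_simps)
next
  case (right y t x)
  have "(\<lambda>c. r * y c) \<in> I" using submod_smul[OF smI right(1)] .
  then have "(\<lambda>p. gtensor x (\<lambda>c. r * y c) p + r * t p) \<in> tensor_ideal I"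
    using tensor_ideal.right right by blast
  then show ?case by (simp add: gtensor_def distrib_left case_prod_beta algebra_simps)
qed

lemma submod_T: "submod (tensor_ideal I)"
  unfolding submod_def using tensor_ideal.zero T_add T_smul by blast

lemma T_left: "x \<in> I \<Longrightarrow> gtensor x y \<in> tensor_ideal I"
  using tensor_ideal.left[OF _ tensor_ideal.zero, where x=x and y=y] by simp
lemma T_right: "y \<in> I \<Longrightarrow> gtensor x y \<in> tensor_ideal I"
  using tensor_ideal.right[OF _ tensor_ideal.zero, where x=x and y=y] by simp

lemma T_shift: "F \<in> tensor_ideal I \<Longrightarrow> (\<lambda>p. F (fst p + d, snd p + d)) \<in> tensor_ideal I"
proof (induction F rule: tensor_ideal.induct)
  case zero then show ?case using tensor_ideal.zero[of I] by (simp add: case_prod_beta)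
next
  case (left x t y)
  have "(\<lambda>p. gtensor (\<lambda>a. x (a + d)) (\<lambda>a. y (a + d)) p + t (fst p + d, snd p + d)) \<in> tensor_ideal I"
    using tensor_ideal.left[OF I_shift[OF idl left(1)] left(3)] by blast
  then show ?case by (simp add: gtensor_def case_prod_beta)
next
  case (right y t x)
  have "(\<lambda>p. gtensor (\<lambda>a. x (a + d)) (\<lambda>a. y (a + d)) p + t (fst p + d, snd p + d)) \<in> tensor_ideal I"
    using tensor_ideal.right[OF I_shift[OF idl right(1)] right(3)] by blast
  then show ?case by (simp add: gtensor_def case_prod_beta)
qed

end

primrec nm :: "nat \<Rightarrow> 'a::ab_group_add \<Rightarrow> 'a" where
  "nm 0 a = 0"
| "nm (Suc k) a = a + nm k a"

lemma nm_zero[simp]: "nm k 0 = 0"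
  by (induction k) auto

lemma sum_const_nm: "finite A \<Longrightarrow> (\<Sum>x\<in>A. (a::'a::ab_group_add)) = nm (card A) a"
  by (induction A rule: finite_induct) auto

lemma nm_card: "nm (card (UNIV::'a::{finite,ab_group_add} set)) (a::'a) = 0"
proof -
  have "(\<Sum>x\<in>(UNIV::'a set). x + a) = (\<Sum>x\<in>UNIV. x)"
    by (rule sum.reindex_bij_witness[of _ "\<lambda>x. x - a" "\<lambda>x. x + a"]) auto
  moreover have "(\<Sum>x\<in>(UNIV::'a set). x + a) = (\<Sum>x\<in>UNIV. x) + nm (card (UNIV::'a set)) a"
    by (simp add: sum.distrib sum_const_nm)
  ultimately show ?thesis by simp
qed

definition mulk :: "nat \<Rightarrow> ('a::ab_group_add \<Rightarrow> 'r::comm_ring_1) \<Rightarrow> ('a \<Rightarrow> 'r)" where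
  "mulk k x = (\<lambda>c. \<Sum>a\<in>UNIV. if nm k a = c then x a else 0)"

definition Phi :: "nat \<Rightarrow> ('a::ab_group_add \<times> 'a \<Rightarrow> 'r::comm_ring_1) \<Rightarrow> ('a \<Rightarrow> 'r)" where
  "Phi k F = (\<lambda>c. \<Sum>p\<in>UNIV. if fst p + nm k (snd p) = c then F p else 0)"

lemma sum_pairs:
  fixes g :: "'a::finite \<times> 'b::finite \<Rightarrow> 'r::comm_monoid_add"
  shows "(\<Sum>p\<in>UNIV. g p) = (\<Sum>a\<in>UNIV. \<Sum>b\<in>UNIV. g (a, b))"
  by (simp add: sum.cartesian_product UNIV_Times_UNIV[symmetric] del: UNIV_Times_UNIV)

lemma Phi_gt:
  fixes x y :: "'a::{finite,ab_group_add} \<Rightarrow> 'r::comm_ring_1"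
  shows "Phi k (gtensor x y) = conv x (mulk k y)"
proof (rule ext)
  fix c
  have "Phi k (gtensor x y) c = (\<Sum>a\<in>UNIV. \<Sum>b\<in>UNIV. if nm k b = c - a then x a * y b else 0)"
    unfolding Phi_def sum_pairs
    by (intro sum.cong refl) (simp add: gtensor_def eq_diff_eq add.commute)
  also have "\<dots> = conv x (mulk k y) c"
    unfolding conv_def mulk_def sum_distrib_left
    by (intro sum.cong refl) auto
  finally show "Phi k (gtensor x y) c = conv x (mulk k y) c" .
qed

lemma Phi_comult:
  fixes x :: "'a::{finite,ab_group_add} \<Rightarrow> 'r::comm_ring_1"
  shows "Phi k (comult x) = mulk (Suc k) x"
proof (rule ext)
  fix c
  have "Phi k (comult x) c = (\<Sum>a\<in>UNIV. \<Sum>b\<in>UNIV. if b = a then (if a + nm k a = c then x a else 0) else 0)"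
    unfolding Phi_def sum_pairs
    by (intro sum.cong refl) (simp add: comult_def)
  also have "\<dots> = mulk (Suc k) x c"
    unfolding mulk_def by simp
  finally show "Phi k (comult x) c = mulk (Suc k) x c" .
qed

lemma if_plus0: "(if P then (a::'b::comm_monoid_add) + b else 0) = (if P then a else 0) + (if P then b else 0)"
  by simp
lemma if_minus0: "(if P then (a::'b::ab_group_add) - b else 0) = (if P then a else 0) - (if P then b else 0)"
  by simp

lemma Phi_add: "Phi k (\<lambda>p. F p + G p) = (\<lambda>c. Phi k F c + Phi k G c)"
  unfolding Phi_def if_plus0 sum.distrib by simp
lemma Phi_diff: "Phi k (\<lambda>p. F p - G p) = (\<lambda>c. Phi k F c - Phi k G c)"
  unfolding Phi_def if_minus0 sum_subtractf by simp
lemma Phi_zero: "Phi k (\<lambda>p. 0) = (\<lambda>c. 0)"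
  unfolding Phi_def by simp

lemma mulk_add: "mulk k (\<lambda>p. F p + G p) = (\<lambda>c. mulk k F c + mulk k G c)"
  unfolding mulk_def if_plus0 sum.distrib by simp
lemma mulk_diff: "mulk k (\<lambda>p. F p - G p) = (\<lambda>c. mulk k F c - mulk k G c)"
  unfolding mulk_def if_minus0 sum_subtractf by simp
lemma mulk_dl0: "mulk k (dl 0 :: 'a::{finite,ab_group_add} \<Rightarrow> 'r::comm_ring_1) = dl 0"
proof (rule ext)
  fix c
  have "mulk k (dl 0 :: 'a \<Rightarrow> 'r) c = (\<Sum>a\<in>UNIV. if a = 0 then (if nm k a = c then 1 else 0) else 0)"
    unfolding mulk_def dl_def by (intro sum.cong refl) auto
  then show "mulk k (dl 0 :: 'a \<Rightarrow> 'r) c = dl 0 c" by (auto simp: dl_def)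
qed
lemma mulk_0: "mulk 0 (x :: 'a::{finite,ab_group_add} \<Rightarrow> 'r::comm_ring_1) = (\<lambda>c. if c = 0 then counit x else 0)"
proof (rule ext)
  fix c show "mulk 0 x c = (if c = 0 then counit x else 0)"
    unfolding mulk_def counit_def by (cases "c = 0") simp_all
qed
lemma mulk_N: "mulk (card (UNIV::'a set)) (x :: 'a::{finite,ab_group_add} \<Rightarrow> 'r::comm_ring_1) = mulk 0 x"
  unfolding mulk_def by (simp only: nm_card nm.simps)

context
  fixes I :: "('a::{finite, ab_group_add} \<Rightarrow> 'r::comm_ring_1) set"
  assumes loc: "is_local TYPE('r)" and hopf: "hopf_ideal I"
begin

lemma Phi_T:
  assumes mk: "\<And>x. x \<in> I \<Longrightarrow> mulk k x \<in> I"
  shows "F \<in> tensor_ideal I \<Longrightarrow> Phi k F \<in> I"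
proof (induction F rule: tensor_ideal.induct)
  case zero
  have "Phi k (\<lambda>p::'a\<times>'a. 0::'r) = (\<lambda>c. 0)" by (rule Phi_zero)
  then show ?case using submod_zero[OF smI[OF loc hopf]] by simp
next
  case (left x t y)
  then show ?case unfolding Phi_add Phi_gt
    using submod_add[OF smI[OF loc hopf] I_conv'[OF idl[OF loc hopf]]] by auto
next
  case (right y t x)
  then show ?case unfolding Phi_add Phi_gt
    using submod_add[OF smI[OF loc hopf] I_conv[OF idl[OF loc hopf] mk]] by auto
qed

lemma mulk_I: "x \<in> I \<Longrightarrow> mulk k x \<in> I"
proof (induction k arbitrary: x)
  case (0 x)
  then have "counit x = 0" using I_counit[OF loc hopf] by blast
  then have "mulk 0 x = (\<lambda>c. 0)" unfolding mulk_0 by (intro ext) simp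
  then show ?case using submod_zero[OF smI[OF loc hopf]] by simp
next
  case (Suc k)
  then show ?case using Phi_T[of k "comult x"] Phi_comult I_comult[OF loc hopf] by metis
qed

lemma mulk_mv: "(y :: 'a \<Rightarrow> 'r) \<in> mv \<Longrightarrow> mulk k y \<in> mv"
  unfolding mv_def mulk_def
  apply (simp, intro allI)
  apply (rule m_sum[OF loc])
  apply (simp add: m_zero[OF loc])
  done

lemma mulk_K: "x \<in> ext_ideal I \<Longrightarrow> mulk k x \<in> ext_ideal I"
proof -
  assume "x \<in> ext_ideal I"
  then obtain i1 y1 where h: "i1 \<in> I" "y1 \<in> mv" "x = (\<lambda>a. i1 a + y1 a)"
    unfolding K_iff[OF loc hopf] by blast
  have "mulk k x = (\<lambda>c. mulk k i1 c + mulk k y1 c)" using h mulk_add by simp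
  then show ?thesis unfolding K_iff[OF loc hopf] using mulk_I[OF h(1)] mulk_mv[OF h(2)] by blast
qed

lemma nakayama:
  fixes w :: "'b \<Rightarrow> 'a \<Rightarrow> 'r"
  assumes "finite S"
  shows "(\<And>a b. M b a \<in> maxideal) \<Longrightarrow>
    (\<And>b. b \<in> S \<Longrightarrow> (\<lambda>c. w b c - (\<Sum>a\<in>S. M b a * w a c)) \<in> I) \<Longrightarrow> b \<in> S \<Longrightarrow> w b \<in> I"
  using assms
proof (induction S arbitrary: M b rule: finite_induct)
  case empty then show ?case by simp
next
  case (insert s S)
  note sm = smI[OF loc hopf]
  have Es0: "(\<lambda>c. (1 - M s s) * w s c - (\<Sum>a\<in>S. M s a * w a c)) \<in> I"
    using insert.prems(2)[of s] insert.hyps by (simp add: algebra_simps)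
  obtain r where r: "r * (1 - M s s) = 1"
    using m_unit m_one_minus[OF loc insert.prems(1)] by blast
  have Es: "(\<lambda>c. w s c - (\<Sum>a\<in>S. (r * M s a) * w a c)) \<in> I"
  proof (rule submod_eq[OF submod_smul[OF sm Es0, of r]])
    fix c
    show "w s c - (\<Sum>a\<in>S. (r * M s a) * w a c) = r * ((1 - M s s) * w s c - (\<Sum>a\<in>S. M s a * w a c))"
    proof -
      have r': "r - r * M s s = 1" using r by (simp add: algebra_simps)
      show ?thesis by (simp add: right_diff_distrib sum_distrib_left mult.assoc[symmetric] r r')
    qed
  qed
  define M' where "M' b a = M b a + M b s * r * M s a" for b a
  have M'm: "M' b a \<in> maxideal" for a b
    unfolding M'_def using insert.prems(1) by (simp add: m_add[OF loc] m_mult')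
  have IH: "w b \<in> I" if "b \<in> S" for b
  proof (rule insert.IH[of M' b, OF M'm _ that])
    fix b assume b: "b \<in> S"
    have e1: "(\<lambda>c. w b c - (M b s * w s c + (\<Sum>a\<in>S. M b a * w a c))) \<in> I"
      using insert.prems(2)[of b] insert.hyps b by simp
    have e2: "(\<lambda>c. M b s * (w s c - (\<Sum>a\<in>S. (r * M s a) * w a c))) \<in> I"
      using submod_smul[OF sm Es] .
    show "(\<lambda>c. w b c - (\<Sum>a\<in>S. M' b a * w a c)) \<in> I"
    proof (rule submod_eq[OF submod_add[OF sm e1 e2]])
      fix c
      show "w b c - (\<Sum>a\<in>S. M' b a * w a c) = w b c - (M b s * w s c + (\<Sum>a\<in>S. M b a * w a c)) +
          M b s * (w s c - (\<Sum>a\<in>S. r * M s a * w a c))"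
        by (simp add: M'_def distrib_right sum.distrib sum_distrib_left mult.assoc right_diff_distrib)
    qed
  qed
  have ws: "(\<lambda>c. (\<Sum>a\<in>S. (r * M s a) * w a c)) \<in> I"
    using submod_sum[OF sm insert.hyps(1) IH, where r="\<lambda>a. r * M s a"] by simp
  have "w s \<in> I" using submod_add[OF sm Es ws] by simp
  then show ?case using IH insert.prems(3) by auto
qed

end

context
  fixes I :: "('a::{finite, ab_group_add} \<Rightarrow> 'r::comm_ring_1) set"
  assumes loc: "is_local TYPE('r)" and hopf: "hopf_ideal I"
    and Ninv: "of_nat (card (UNIV :: 'a set)) dvd (1::'r)"
begin

lemma lift0:
  assumes cu: "counit u = 1"
    and gl: "(\<lambda>p. comult u p - gtensor u u p) \<in> tensor_ideal I"
    and uk: "(\<lambda>a. u a - dl 0 a) \<in> ext_ideal I"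
  shows "(\<lambda>a. u a - dl 0 a) \<in> I"
proof -
  note sm = smI[OF loc hopf]
  note sK = submod_K[OF loc hopf]
  define N where "N = card (UNIV::'a set)"
  define S where "S = (\<lambda>c. \<Sum>k<N. mulk k u c)"
  define v where "v = (\<lambda>a. u a - dl 0 a)"
  have s1: "(\<lambda>c. mulk (Suc k) u c - conv u (mulk k u) c) \<in> I" for k
  proof -
    have "Phi k (\<lambda>p. comult u p - gtensor u u p) \<in> I"
      using Phi_T[OF loc hopf mulk_I[OF loc hopf] gl] .
    then show ?thesis unfolding Phi_diff Phi_comult Phi_gt .
  qed
  have s2: "(\<lambda>c. \<Sum>k<N. (mulk (Suc k) u c - conv u (mulk k u) c)) \<in> I"
    by (rule submod_sum'[OF sm]) (auto intro: s1)
  have s3: "(\<Sum>k<N. mulk (Suc k) u c) = S c" for c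
  proof -
    have "(\<Sum>k<Suc N. mulk k u c) = mulk 0 u c + (\<Sum>k<N. mulk (Suc k) u c)"
      by (rule sum.lessThan_Suc_shift)
    moreover have "(\<Sum>k<Suc N. mulk k u c) = S c + mulk N u c"
      unfolding S_def by simp
    moreover have "mulk N u c = mulk 0 u c" unfolding N_def mulk_N ..
    ultimately show ?thesis by simp
  qed
  have s4: "(\<lambda>c. \<Sum>k<N. conv u (mulk k u) c) = conv u S"
    unfolding S_def conv_sum_right ..
  have s5: "(\<lambda>c. S c - conv u S c) \<in> I"
    using s2 unfolding sum_subtractf s3 s4[symmetric] .
  have s6: "conv v S = (\<lambda>c. conv u S c - S c)"
    unfolding v_def conv_diff_left conv_dl_left by simp
  have cvS: "conv v S \<in> I"
    unfolding s6 using submod_neg[OF sm s5] by simp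
  have mkv: "mulk k v = (\<lambda>c. mulk k u c - dl 0 c)" for k
    unfolding v_def mulk_diff mulk_dl0 ..
  have "(\<lambda>c. \<Sum>k<N. mulk k v c) \<in> ext_ideal I"
    by (rule submod_sum'[OF sK]) (use mulk_K[OF loc hopf uk[folded v_def]] in auto)
  moreover have "(\<Sum>k<N. mulk k v c) = S c - of_nat N * dl 0 c" for c
    unfolding mkv S_def sum_subtractf by simp
  ultimately have "(\<lambda>c. S c - of_nat N * dl 0 c) \<in> ext_ideal I" by simp
  then have W: "(\<lambda>c. of_nat N * dl 0 c - S c) \<in> ext_ideal I"
    using submod_neg[OF sK] by fastforce
  then obtain i y where iy: "i \<in> I" "y \<in> mv" "(\<lambda>c. of_nat N * dl 0 c - S c) = (\<lambda>a. i a + y a)"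
    unfolding K_iff[OF loc hopf] by blast
  have s9: "conv v (\<lambda>c. of_nat N * dl 0 c - S c) = (\<lambda>c. of_nat N * v c - conv v S c)"
    unfolding conv_diff_right conv_smul_right conv_dl by simp
  have s9': "conv v (\<lambda>c. of_nat N * dl 0 c - S c) = (\<lambda>c. conv v i c + conv v y c)"
    unfolding iy(3) conv_add_right ..
  have s10: "(\<lambda>c. of_nat N * v c - conv v y c) \<in> I"
  proof (rule submod_eq[OF submod_add[OF sm I_conv[OF idl[OF loc hopf] iy(1), of v] cvS]])
    fix c
    have "of_nat N * v c - conv v S c = conv v i c + conv v y c"
      using fun_cong[OF s9, of c] fun_cong[OF s9', of c] by simp
    then show "of_nat N * v c - conv v y c = conv v i c + conv v S c"
      by (simp add: algebra_simps)
  qed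
  obtain r where r: "r * of_nat N = (1::'r)"
    using Ninv unfolding N_def by (auto elim!: dvdE simp: mult.commute)
  define y' where "y' = (\<lambda>a. r * y a)"
  have y'm: "y' \<in> mv" unfolding y'_def using submod_smul[OF smM[OF loc hopf] iy(2)] .
  have D: "(\<lambda>c. v c - conv v y' c) \<in> I"
  proof (rule submod_eq[OF submod_smul[OF sm s10, of r]])
    fix c
    show "v c - conv v y' c = r * (of_nat N * v c - conv v y c)"
      unfolding y'_def conv_smul_right
      by (simp add: right_diff_distrib mult.assoc[symmetric] r)
  qed
  have nak: "(\<lambda>c. v (c - b)) \<in> I" for b
  proof (rule nakayama[OF loc hopf, where w="\<lambda>b c. v (c - b)" and M="\<lambda>b a. y' (a - b)" and S=UNIV])
    show "finite (UNIV :: 'a set)" by simp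
    show "y' (a - b) \<in> maxideal" for a b using y'm unfolding mv_def by simp
    show "b \<in> UNIV" by simp
    fix b :: 'a
    show "(\<lambda>c. v (c - b) - (\<Sum>a\<in>UNIV. y' (a - b) * v (c - a))) \<in> I"
    proof (rule submod_eq[OF I_shift[OF idl[OF loc hopf] D, of "-b"]])
      fix c
      have "conv v y' (c - b) = (\<Sum>a\<in>UNIV. y' (a - b) * v (c - a))"
        unfolding conv_def
        by (rule sum.reindex_bij_witness[of _ "\<lambda>a. c - a" "\<lambda>d. c - d"]) (auto simp: algebra_simps)
      then show "v (c - b) - (\<Sum>a\<in>UNIV. y' (a - b) * v (c - a)) = v (c + - b) - conv v y' (c + - b)"
        by simp
    qed
  qed
  show ?thesis using nak[of 0] unfolding v_def by simp
qed

lemma lift: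
  assumes cu: "counit g = 1"
    and gl: "(\<lambda>p. comult g p - gtensor g g p) \<in> tensor_ideal I"
    and gk: "(\<lambda>a. g a - dl c a) \<in> ext_ideal I"
  shows "(\<lambda>a. g a - dl c a) \<in> I"
proof -
  define u where "u = (\<lambda>a. g (a + c))"
  have "counit u = counit g"
    unfolding u_def counit_def
    by (rule sum.reindex_bij_witness[of _ "\<lambda>a. a - c" "\<lambda>a. a + c"]) auto
  then have cu': "counit u = 1" using cu by simp
  have gl': "(\<lambda>p. comult u p - gtensor u u p) \<in> tensor_ideal I"
  proof (rule submod_eq[OF T_shift[OF loc hopf gl, of c]])
    fix p :: "'a \<times> 'a"
    show "comult u p - gtensor u u p = comult g (fst p + c, snd p + c) - gtensor g g (fst p + c, snd p + c)"
      unfolding u_def comult_def gtensor_def by (simp add: case_prod_beta)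
  qed
  have uk: "(\<lambda>a. u a - dl 0 a) \<in> ext_ideal I"
  proof (rule submod_eq[OF K_shift[OF loc hopf gk, of c]])
    fix a show "u a - dl 0 a = g (a + c) - dl c (a + c)" unfolding u_def dl_def by simp
  qed
  have "(\<lambda>a. u a - dl 0 a) \<in> I" using lift0[OF cu' gl' uk] .
  from I_shift[OF idl[OF loc hopf] this, of "-c"]
  show ?thesis unfolding u_def dl_def by simp
qed

end

lemma dl_sum_S: "finite S \<Longrightarrow> t \<in> S \<Longrightarrow> (\<Sum>s\<in>S. f s * dl s c) = (if c \<in> S then f c else 0)"
  unfolding dl_def by (simp add: if_distrib[of "\<lambda>x. f _ * x"] cong: if_cong)

lemma comult_add: "comult (\<lambda>a. x a + y a) = (\<lambda>p. comult x p + comult y p)"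
  unfolding comult_def by (auto simp: case_prod_beta)

lemma sum_dl_left: "finite A \<Longrightarrow> (\<Sum>b\<in>A. dl a b * g b) = (if a \<in> A then g a else 0)"
proof -
  assume A: "finite A"
  have "(\<Sum>b\<in>A. dl a b * g b) = (\<Sum>b\<in>A. if b = a then g b else 0)"
    by (intro sum.cong) (auto simp: dl_def)
  then show ?thesis using A by simp
qed

lemma sum_dl_right: "finite A \<Longrightarrow> (\<Sum>b\<in>A. g b * dl b c) = (if c \<in> A then g c else 0)"
proof -
  assume A: "finite A"
  have "(\<Sum>b\<in>A. g b * dl b c) = (\<Sum>b\<in>A. if c = b then g b else 0)"
    by (intro sum.cong) (auto simp: dl_def)
  then show ?thesis using A by simp
qed

context
  fixes I :: "('a::{finite, ab_group_add} \<Rightarrow> 'r::comm_ring_1) set"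
  assumes loc: "is_local TYPE('r)" and hopf: "hopf_ideal I"
begin

lemma counit_K: "x \<in> ext_ideal I \<Longrightarrow> counit x \<in> maxideal"
proof -
  assume "x \<in> ext_ideal I"
  then obtain i y where h: "i \<in> I" "y \<in> mv" "x = (\<lambda>a. i a + y a)"
    unfolding K_iff[OF loc hopf] by blast
  have "counit x = counit i + counit y" unfolding h(3) counit_def by (simp add: sum.distrib)
  moreover have "counit y \<in> maxideal" unfolding counit_def
    using h(2) unfolding mv_def by (intro m_sum[OF loc]) auto
  ultimately show ?thesis using I_counit[OF loc hopf h(1)] by simp
qed

lemma comult_mv: "(y :: 'a \<Rightarrow> 'r) \<in> mv \<Longrightarrow> comult y \<in> mv"
  unfolding mv_def comult_def by (auto simp: case_prod_beta m_zero[OF loc])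

end

definition phi :: "('a \<Rightarrow> 'a \<Rightarrow> 'r::comm_ring_1) \<Rightarrow> 'a \<Rightarrow> ('a \<Rightarrow> 'r) \<Rightarrow> 'r" where
  "phi Lam s x = (\<Sum>a\<in>UNIV. x a * Lam a s)"

definition Psi :: "('a \<Rightarrow> 'a \<Rightarrow> 'r::comm_ring_1) \<Rightarrow> 'a \<Rightarrow> 'a \<Rightarrow> ('a \<times> 'a \<Rightarrow> 'r) \<Rightarrow> 'r" where
  "Psi Lam s t F = (\<Sum>p\<in>UNIV. F p * Lam (fst p) s * Lam (snd p) t)"

lemma Psi_add: "Psi Lam s t (\<lambda>p. F p + G p) = Psi Lam s t F + Psi Lam s t G"
  unfolding Psi_def by (simp add: distrib_right sum.distrib)
lemma Psi_diff: "Psi Lam s t (\<lambda>p. F p - G p) = Psi Lam s t F - Psi Lam s t G"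
  unfolding Psi_def by (simp add: left_diff_distrib sum_subtractf)

lemma Psi_gt:
  fixes x y :: "'a::finite \<Rightarrow> 'r::comm_ring_1"
  shows "Psi Lam s t (gtensor x y) = phi Lam s x * phi Lam t y"
  unfolding Psi_def phi_def sum_pairs sum_product gtensor_def
  by (intro sum.cong refl) (simp add: mult_ac)

lemma Psi_comult:
  fixes x :: "'a::finite \<Rightarrow> 'r::comm_ring_1"
  shows "Psi Lam s t (comult x) = (\<Sum>a\<in>UNIV. x a * Lam a s * Lam a t)"
  unfolding Psi_def sum_pairs
proof (intro sum.cong refl)
  fix a
  have "(\<Sum>b\<in>UNIV. comult x (a, b) * Lam (fst (a, b)) s * Lam (snd (a, b)) t)
      = (\<Sum>b\<in>UNIV. if a = b then x a * Lam a s * Lam b t else 0)"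
    by (intro sum.cong refl) (simp add: comult_def)
  then show "(\<Sum>b\<in>UNIV. comult x (a, b) * Lam (fst (a, b)) s * Lam (snd (a, b)) t) = x a * Lam a s * Lam a t"
    by simp
qed

context
  fixes I :: "('a::{finite, ab_group_add} \<Rightarrow> 'r::comm_ring_1) set"
    and S :: "'a set" and Lam :: "'a \<Rightarrow> 'a \<Rightarrow> 'r"
  assumes loc: "is_local TYPE('r)" and hopf: "hopf_ideal I"
    and indS: "\<And>co s. (\<lambda>x. \<Sum>s\<in>S. co s * dl s x) \<in> ext_ideal I \<Longrightarrow> s \<in> S \<Longrightarrow> co s \<in> maxideal"
    and LamK: "\<And>a. (\<lambda>x. dl a x - (\<Sum>s\<in>S. Lam a s * dl s x)) \<in> ext_ideal I"
begin

lemma P1: "(\<lambda>c. x c - (\<Sum>s\<in>S. phi Lam s x * dl s c)) \<in> ext_ideal I"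
proof (rule submod_eq[OF submod_sum[OF submod_K[OF loc hopf] finite_UNIV LamK, where r=x]])
  fix c
  have e1: "(\<Sum>a\<in>UNIV. x a * dl a c) = x c" by (simp add: sum_dl_right)
  have e2: "(\<Sum>a\<in>UNIV. x a * (\<Sum>s\<in>S. Lam a s * dl s c)) = (\<Sum>s\<in>S. phi Lam s x * dl s c)"
    unfolding phi_def sum_distrib_left sum_distrib_right
    by (subst sum.swap) (simp add: mult_ac)
  show "x c - (\<Sum>s\<in>S. phi Lam s x * dl s c) = (\<Sum>a\<in>UNIV. x a * (dl a c - (\<Sum>s\<in>S. Lam a s * dl s c)))"
    by (simp add: right_diff_distrib sum_subtractf e1 e2)
qed

lemma P2: "x \<in> ext_ideal I \<Longrightarrow> s \<in> S \<Longrightarrow> phi Lam s x \<in> maxideal"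
proof -
  assume x: "x \<in> ext_ideal I" and s: "s \<in> S"
  have "(\<lambda>c. x c - (x c - (\<Sum>s\<in>S. phi Lam s x * dl s c))) \<in> ext_ideal I"
    using submod_diff[OF submod_K[OF loc hopf] x P1] .
  then have "(\<lambda>c. (\<Sum>s\<in>S. phi Lam s x * dl s c)) \<in> ext_ideal I" by simp
  then show ?thesis using indS[of "\<lambda>s. phi Lam s x"] s by blast
qed

lemma P3: "u \<in> S \<Longrightarrow> s \<in> S \<Longrightarrow> Lam u s - dl u s \<in> maxideal"
proof -
  assume u: "u \<in> S" and s: "s \<in> S"
  have "(\<lambda>c. (\<Sum>s\<in>S. (dl u s - Lam u s) * dl s c)) \<in> ext_ideal I"
  proof (rule submod_eq[OF LamK[of u]])
    fix c
    have "(\<Sum>s\<in>S. dl u s * dl s c) = dl u c"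
      using u by (simp add: sum_dl_left)
    then show "(\<Sum>s\<in>S. (dl u s - Lam u s) * dl s c) = dl u c - (\<Sum>s\<in>S. Lam u s * dl s c)"
      by (simp add: left_diff_distrib sum_subtractf)
  qed
  from indS[OF this s] show ?thesis using m_neg by fastforce
qed

lemma Q2: "F \<in> tensor_ideal I \<Longrightarrow> s \<in> S \<Longrightarrow> t \<in> S \<Longrightarrow> Psi Lam s t F \<in> maxideal"
proof (induction F rule: tensor_ideal.induct)
  case zero then show ?case unfolding Psi_def by (simp add: m_zero[OF loc])
next
  case (left x t' y)
  then show ?case unfolding Psi_add Psi_gt
    using P2[OF I_K[OF loc hopf left(1)]] by (simp add: m_add[OF loc] m_mult')
next
  case (right y t' x)
  then show ?case unfolding Psi_add Psi_gt
    using P2[OF I_K[OF loc hopf right(1)]] by (simp add: m_add[OF loc] m_mult)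
qed

lemma Q3: "F \<in> mv \<Longrightarrow> Psi Lam s t F \<in> maxideal"
proof -
  assume F: "F \<in> mv"
  show ?thesis unfolding Psi_def
  proof (intro m_sum[OF loc])
    fix p :: "'a \<times> 'a"
    have "F p \<in> maxideal" using F unfolding mv_def by blast
    then show "F p * Lam (fst p) s * Lam (snd p) t \<in> maxideal" by (simp add: m_mult' mult.assoc)
  qed
qed

lemma Q5: "x \<in> ext_ideal I \<Longrightarrow> s \<in> S \<Longrightarrow> t \<in> S \<Longrightarrow> Psi Lam s t (comult x) \<in> maxideal"
proof -
  assume x: "x \<in> ext_ideal I" and st: "s \<in> S" "t \<in> S"
  then obtain i y where h: "i \<in> I" "y \<in> mv" "x = (\<lambda>a. i a + y a)"
    unfolding K_iff[OF loc hopf] by blast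
  show ?thesis unfolding h(3) comult_add Psi_add
    using Q2[OF I_comult[OF loc hopf h(1)] st] Q3[OF comult_mv[OF loc hopf h(2)]]
    by (simp add: m_add[OF loc])
qed

lemma K1: "s \<in> S \<Longrightarrow> t \<in> S \<Longrightarrow> Lam a s * Lam a t - (if s = t then Lam a s else 0) \<in> maxideal"
proof -
  assume s: "s \<in> S" and t: "t \<in> S"
  define x where "x = (\<lambda>b. dl a b - (\<Sum>u\<in>S. Lam a u * dl u b))"
  have "Psi Lam s t (comult x) \<in> maxideal" using Q5[OF LamK[of a, folded x_def] s t] .
  moreover have "Psi Lam s t (comult x) = Lam a s * Lam a t - (\<Sum>u\<in>S. Lam a u * (Lam u s * Lam u t))"
  proof -
    have "Psi Lam s t (comult x) = (\<Sum>b\<in>UNIV. dl a b * Lam b s * Lam b t)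
       - (\<Sum>b\<in>UNIV. \<Sum>u\<in>S. Lam a u * dl u b * Lam b s * Lam b t)"
      unfolding Psi_comult x_def by (simp add: left_diff_distrib sum_subtractf sum_distrib_right)
    also have "(\<Sum>b\<in>UNIV. dl a b * Lam b s * Lam b t) = Lam a s * Lam a t"
      using sum_dl_left[of UNIV a "\<lambda>b. Lam b s * Lam b t"] by (simp add: mult.assoc)
    also have "(\<Sum>b\<in>UNIV. \<Sum>u\<in>S. Lam a u * dl u b * Lam b s * Lam b t)
        = (\<Sum>u\<in>S. \<Sum>b\<in>UNIV. Lam a u * dl u b * Lam b s * Lam b t)"
      by (rule sum.swap)
    also have "\<dots> = (\<Sum>u\<in>S. Lam a u * (Lam u s * Lam u t))"
    proof (intro sum.cong refl)
      fix u
      show "(\<Sum>b\<in>UNIV. Lam a u * dl u b * Lam b s * Lam b t) = Lam a u * (Lam u s * Lam u t)"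
        using sum_dl_left[of UNIV u "\<lambda>b. Lam a u * Lam b s * Lam b t"] by (simp add: mult_ac)
    qed
    finally show ?thesis .
  qed
  moreover have "(\<Sum>u\<in>S. Lam a u * (Lam u s * Lam u t - dl u s * dl u t)) \<in> maxideal"
  proof (intro m_sum[OF loc] m_mult)
    fix u assume u: "u \<in> S"
    have "Lam u s * Lam u t - dl u s * dl u t = Lam u s * (Lam u t - dl u t) + (Lam u s - dl u s) * dl u t"
      by (simp add: algebra_simps)
    then show "Lam u s * Lam u t - dl u s * dl u t \<in> maxideal"
      using P3[OF u s] P3[OF u t] by (simp add: m_add[OF loc] m_mult m_mult')
  qed
  moreover have "(\<Sum>u\<in>S. Lam a u * (dl u s * dl u t)) = (if s = t then Lam a s else 0)"
  proof -
    have "(\<Sum>u\<in>S. Lam a u * (dl u s * dl u t)) = (\<Sum>u\<in>S. (Lam a u * dl u t) * dl u s)"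
      by (simp add: mult_ac)
    also have "\<dots> = Lam a s * dl s t" using s by (simp add: sum_dl_right)
    finally show ?thesis by (simp add: dl_def)
  qed
  ultimately show ?thesis
  proof -
    assume h1: "Psi Lam s t (comult x) \<in> maxideal"
      and h2: "Psi Lam s t (comult x) = Lam a s * Lam a t - (\<Sum>u\<in>S. Lam a u * (Lam u s * Lam u t))"
      and h3: "(\<Sum>u\<in>S. Lam a u * (Lam u s * Lam u t - dl u s * dl u t)) \<in> maxideal"
      and h4: "(\<Sum>u\<in>S. Lam a u * (dl u s * dl u t)) = (if s = t then Lam a s else 0)"
    have e: "(\<Sum>u\<in>S. Lam a u * (Lam u s * Lam u t - dl u s * dl u t))
        = (\<Sum>u\<in>S. Lam a u * (Lam u s * Lam u t)) - (if s = t then Lam a s else 0)"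
      unfolding h4[symmetric] right_diff_distrib sum_subtractf ..
    have "Lam a s * Lam a t - (if s = t then Lam a s else 0)
        = Psi Lam s t (comult x) + (\<Sum>u\<in>S. Lam a u * (Lam u s * Lam u t - dl u s * dl u t))"
      unfolding e h2 by simp
    then show ?thesis using m_add[OF loc h1 h3] by simp
  qed
qed

end

context
  fixes I :: "('a::{finite, ab_group_add} \<Rightarrow> 'r::comm_ring_1) set"
    and S :: "'a set" and Lam :: "'a \<Rightarrow> 'a \<Rightarrow> 'r"
  assumes loc: "is_local TYPE('r)" and hopf: "hopf_ideal I"
    and indS: "\<And>co s. (\<lambda>x. \<Sum>s\<in>S. co s * dl s x) \<in> ext_ideal I \<Longrightarrow> s \<in> S \<Longrightarrow> co s \<in> maxideal"
    and LamK: "\<And>a. (\<lambda>x. dl a x - (\<Sum>s\<in>S. Lam a s * dl s x)) \<in> ext_ideal I"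
begin

lemma conclude:
  assumes cf: "counit f - 1 \<in> maxideal"
    and t0: "t0 \<in> tensor_ideal I" and u0: "u0 \<in> mv"
    and eq: "\<forall>p. comult f p - gtensor f f p = t0 p + u0 p"
  shows "\<exists>c. (\<lambda>a. f a - dl c a) \<in> ext_ideal I"
proof -
  have Q2': "\<And>F s t. F \<in> tensor_ideal I \<Longrightarrow> s \<in> S \<Longrightarrow> t \<in> S \<Longrightarrow> Psi Lam s t F \<in> maxideal"
    by (rule Q2[where I=I and S=S and Lam=Lam, OF loc hopf]) (blast intro: indS LamK)+
  have Q3': "\<And>F s t. F \<in> mv \<Longrightarrow> Psi Lam s t F \<in> maxideal"
    by (rule Q3[where I=I and S=S and Lam=Lam, OF loc hopf]) (blast intro: indS LamK)+
  have K1': "\<And>s t a. s \<in> S \<Longrightarrow> t \<in> S \<Longrightarrow> Lam a s * Lam a t - (if s = t then Lam a s else 0) \<in> maxideal"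
    by (rule K1[where I=I and S=S and Lam=Lam, OF loc hopf]) (blast intro: indS LamK)+
  have P1': "\<And>x. (\<lambda>c. x c - (\<Sum>s\<in>S. phi Lam s x * dl s c)) \<in> ext_ideal I"
    by (rule P1[where I=I and S=S and Lam=Lam, OF loc hopf]) (blast intro: indS LamK)+
  define psi where "psi s = phi Lam s f" for s
  have G1: "psi s * psi t - (if s = t then psi s else 0) \<in> maxideal" if s: "s \<in> S" and t: "t \<in> S" for s t
  proof -
    have "(\<lambda>p. comult f p - gtensor f f p) = (\<lambda>p. t0 p + u0 p)" using eq by auto
    then have "Psi Lam s t (\<lambda>p. comult f p - gtensor f f p) \<in> maxideal"
      using Q2'[OF t0 s t] Q3'[OF u0, of s t]
      by (simp add: Psi_add m_add[OF loc])
    then have h1: "(\<Sum>a\<in>UNIV. f a * Lam a s * Lam a t) - psi s * psi t \<in> maxideal"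
      unfolding Psi_diff Psi_comult Psi_gt psi_def .
    have h2: "(\<Sum>a\<in>UNIV. f a * (Lam a s * Lam a t - (if s = t then Lam a s else 0))) \<in> maxideal"
      by (intro m_sum[OF loc] m_mult K1'[OF s t])
    have e: "(\<Sum>a\<in>UNIV. f a * (Lam a s * Lam a t - (if s = t then Lam a s else 0)))
       = (\<Sum>a\<in>UNIV. f a * Lam a s * Lam a t) - (if s = t then psi s else 0)"
      unfolding psi_def phi_def right_diff_distrib sum_subtractf
      by (simp add: mult.assoc)
    have eq2: "psi s * psi t - (if s = t then psi s else 0) =
      (\<Sum>a\<in>UNIV. f a * (Lam a s * Lam a t - (if s = t then Lam a s else 0)))
       - ((\<Sum>a\<in>UNIV. f a * Lam a s * Lam a t) - psi s * psi t)"
      unfolding e by simp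
    show ?thesis unfolding eq2 using m_diff[OF loc h2 h1] .
  qed
  have P1f: "(\<lambda>c. f c - (\<Sum>s\<in>S. psi s * dl s c)) \<in> ext_ideal I"
    unfolding psi_def using P1' .
  have G2: "(\<Sum>s\<in>S. psi s) - 1 \<in> maxideal"
  proof -
    have "counit (\<lambda>c. f c - (\<Sum>s\<in>S. psi s * dl s c)) \<in> maxideal"
      using counit_K[OF loc hopf P1f] .
    moreover have "counit (\<lambda>c. f c - (\<Sum>s\<in>S. psi s * dl s c)) = counit f - (\<Sum>s\<in>S. psi s)"
    proof -
      have "(\<Sum>c\<in>UNIV. \<Sum>s\<in>S. psi s * dl s c) = (\<Sum>s\<in>S. \<Sum>c\<in>UNIV. psi s * dl s c)"
        by (rule sum.swap)
      also have "\<dots> = (\<Sum>s\<in>S. psi s)"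
        by (intro sum.cong refl) (simp add: sum_distrib_left[symmetric] dl_def)
      finally show ?thesis unfolding counit_def sum_subtractf by simp
    qed
    ultimately have "counit f - (\<Sum>s\<in>S. psi s) \<in> maxideal" by simp
    from m_diff[OF loc cf this] show ?thesis by simp
  qed
  obtain s0 where s0: "s0 \<in> S" "psi s0 \<notin> maxideal"
  proof (rule ccontr)
    assume "\<not> thesis"
    then have "\<forall>s\<in>S. psi s \<in> maxideal" using that by blast
    then have "(\<Sum>s\<in>S. psi s) \<in> maxideal" by (intro m_sum[OF loc]) auto
    from m_diff[OF loc this G2] have "(1::'r) \<in> maxideal" by simp
    then show False using m_one by blast
  qed
  obtain r where r: "r * psi s0 = 1" using m_unit[OF s0(2)] by blast
  have coef: "psi s - dl s0 s \<in> maxideal" if s: "s \<in> S" for s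
  proof (cases "s = s0")
    case True
    have "psi s0 - 1 = r * (psi s0 * psi s0 - psi s0)"
      by (simp add: algebra_simps r mult.assoc[symmetric])
    then show ?thesis using True m_mult[OF G1[OF s0(1) s0(1)], of r] by (simp add: dl_def)
  next
    case False
    have "psi s = r * (psi s0 * psi s - 0)"
      by (simp add: r mult.assoc[symmetric])
    then show ?thesis using False m_mult[OF G1[OF s0(1) s], of r] by (simp add: dl_def)
  qed
  have mvpart: "(\<lambda>c. \<Sum>s\<in>S. (psi s - dl s0 s) * dl s c) \<in> mv"
    unfolding mv_def by (auto intro!: m_sum[OF loc] m_mult' coef)
  have "(\<lambda>c. f c - dl s0 c) \<in> ext_ideal I"
  proof (rule submod_eq[OF submod_add[OF submod_K[OF loc hopf] P1f mv_K[OF loc hopf mvpart]]])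
    fix c
    have h: "dl s0 c = (\<Sum>s\<in>S. dl s0 s * dl s c)" using s0(1) by (simp add: sum_dl_left)
    show "f c - dl s0 c = f c - (\<Sum>s\<in>S. psi s * dl s c) + (\<Sum>s\<in>S. (psi s - dl s0 s) * dl s c)"
      by (subst h) (simp add: left_diff_distrib sum_subtractf)
  qed
  then show ?thesis by blast
qed

end

lemma field_part:
  fixes I :: "('a::{finite, ab_group_add} \<Rightarrow> 'r::comm_ring_1) set"
  assumes loc: "is_local TYPE('r)" and hopf: "hopf_ideal I"
    and cf: "counit f - 1 \<in> maxideal"
    and t0: "t0 \<in> tensor_ideal I" and u0: "u0 \<in> mv"
    and eq: "\<forall>p. comult f p - gtensor f f p = t0 p + u0 p"
  shows "\<exists>c. (\<lambda>a. f a - dl c a) \<in> ext_ideal I"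
proof -
  note sK = submod_K[OF loc hopf]
  define indep where "indep S \<longleftrightarrow> (\<forall>co s. (\<lambda>x. \<Sum>s'\<in>S. co s' * dl s' x) \<in> ext_ideal I \<longrightarrow> s \<in> S \<longrightarrow> co s \<in> maxideal)"
    for S :: "'a set"
  have fin: "finite {S::'a set. indep S}" by (rule finite)
  have ne: "{S::'a set. indep S} \<noteq> {}"
  proof -
    have "indep {}" unfolding indep_def by simp
    then show ?thesis by blast
  qed
  obtain S where S: "S \<in> {S. indep S}" and Smax: "\<forall>b\<in>{S. indep S}. S \<le> b \<longrightarrow> S = b"
    using finite_has_maximal[OF fin ne] by blast
  have indS: "co s \<in> maxideal" if "(\<lambda>x. \<Sum>s\<in>S. co s * dl s x) \<in> ext_ideal I" "s \<in> S" for co s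
  proof -
    from S have "indep S" by simp
    then show ?thesis using that unfolding indep_def by blast
  qed
  have span: "\<exists>l. (\<lambda>x. dl a x - (\<Sum>s\<in>S. l s * dl s x)) \<in> ext_ideal I" for a
  proof (cases "a \<in> S")
    case True
    have e: "(\<lambda>x. dl a x - (\<Sum>s\<in>S. dl a s * dl s x)) = (\<lambda>x. 0)"
      using True by (simp add: sum_dl_left)
    have "(\<lambda>x. dl a x - (\<Sum>s\<in>S. dl a s * dl s x)) \<in> ext_ideal I"
      unfolding e by (rule submod_zero[OF sK])
    then show ?thesis by (rule exI[where x="dl a"])
  next
    case False
    have "\<not> indep (insert a S)"
    proof
      assume "indep (insert a S)"
      then have "S = insert a S" using Smax by blast
      then show False using False by blast
    qed
    then obtain co s where co: "(\<lambda>x. \<Sum>s'\<in>insert a S. co s' * dl s' x) \<in> ext_ideal I"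
      "s \<in> insert a S" "co s \<notin> maxideal"
      unfolding indep_def by blast
    have co': "(\<lambda>x. co a * dl a x + (\<Sum>s'\<in>S. co s' * dl s' x)) \<in> ext_ideal I"
      using co(1) False by simp
    have coa: "co a \<notin> maxideal"
    proof
      assume am: "co a \<in> maxideal"
      have "(\<lambda>x. co a * dl a x) \<in> mv" unfolding mv_def using am by (simp add: m_mult')
      from submod_diff[OF sK co' mv_K[OF loc hopf this]]
      have "(\<lambda>x. \<Sum>s'\<in>S. co s' * dl s' x) \<in> ext_ideal I" by simp
      then have "\<forall>s\<in>S. co s \<in> maxideal" using indS[of co] by blast
      then show False using co(2,3) am by blast
    qed
    obtain r where r: "r * co a = 1" using m_unit[OF coa] by blast
    have "(\<lambda>x. dl a x - (\<Sum>s\<in>S. (- (r * co s)) * dl s x)) \<in> ext_ideal I"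
    proof (rule submod_eq[OF submod_smul[OF sK co', of r]])
      fix x
      show "dl a x - (\<Sum>s\<in>S. (- (r * co s)) * dl s x) = r * (co a * dl a x + (\<Sum>s'\<in>S. co s' * dl s' x))"
        by (simp add: distrib_left sum_distrib_left mult.assoc[symmetric] r sum_negf)
    qed
    then show ?thesis by (rule exI[where x="\<lambda>s. - (r * co s)"])
  qed
  obtain Lam where LamK: "\<And>a. (\<lambda>x. dl a x - (\<Sum>s\<in>S. Lam a s * dl s x)) \<in> ext_ideal I"
    using choice[of "\<lambda>a l. (\<lambda>x. dl a x - (\<Sum>s\<in>S. l s * dl s x)) \<in> ext_ideal I"] span by blast
  show ?thesis
    apply (rule conclude[where I=I and S=S and Lam=Lam, OF loc hopf _ _ cf t0 u0 eq])
     apply (erule indS, assumption)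
    apply (rule LamK)
    done
qed

lemma cls_eq: "submod J \<Longrightarrow> cls J f = cls J g \<longleftrightarrow> (\<lambda>a. f a - g a) \<in> J"
proof
  assume J: "submod J" and e: "cls J f = cls J g"
  have "f \<in> cls J f" unfolding cls_def using submod_zero[OF J] by simp
  then show "(\<lambda>a. f a - g a) \<in> J" using e unfolding cls_def by simp
next
  assume J: "submod J" and d: "(\<lambda>a. f a - g a) \<in> J"
  show "cls J f = cls J g"
  proof (intro set_eqI iffI)
    fix h assume "h \<in> cls J f"
    then have "(\<lambda>a. h a - f a) \<in> J" unfolding cls_def by simp
    from submod_add[OF J this d] show "h \<in> cls J g" unfolding cls_def by simp
  next
    fix h assume "h \<in> cls J g"
    then have "(\<lambda>a. h a - g a) \<in> J" unfolding cls_def by simp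
    from submod_diff[OF J this d] show "h \<in> cls J f" unfolding cls_def by simp
  qed
qed

lemma reduce_cls:
  fixes I :: "('a::{finite, ab_group_add} \<Rightarrow> 'r::comm_ring_1) set"
  assumes loc: "is_local TYPE('r)" and hopf: "hopf_ideal I"
  shows "reduce I (cls I f) = cls (ext_ideal I) f"
proof (intro set_eqI iffI)
  fix g assume "g \<in> reduce I (cls I f)"
  then obtain h where h: "(\<lambda>a. h a - f a) \<in> I" "(\<lambda>a. g a - h a) \<in> ext_ideal I"
    unfolding reduce_def cls_def by blast
  from submod_add[OF submod_K[OF loc hopf] h(2) I_K[OF loc hopf h(1)]]
  show "g \<in> cls (ext_ideal I) f" unfolding cls_def by simp
next
  fix g assume "g \<in> cls (ext_ideal I) f"
  moreover have "f \<in> cls I f" unfolding cls_def using submod_zero[OF smI[OF loc hopf]] by simp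
  ultimately show "g \<in> reduce I (cls I f)" unfolding reduce_def cls_def by blast
qed

lemma dl_grouplike:
  fixes I :: "('a::{finite, ab_group_add} \<Rightarrow> 'r::comm_ring_1) set"
  shows "counit (dl c :: 'a \<Rightarrow> 'r) = 1" and "(\<lambda>p. comult (dl c) p - gtensor (dl c) (dl c) p) \<in> tensor_ideal I"
proof -
  show "counit (dl c :: 'a \<Rightarrow> 'r) = 1" unfolding counit_def dl_def by simp
  have "(\<lambda>p. comult (dl c :: 'a \<Rightarrow> 'r) p - gtensor (dl c) (dl c) p) = (\<lambda>p. 0)"
    unfolding comult_def gtensor_def dl_def by (auto simp: case_prod_beta)
  then show "(\<lambda>p. comult (dl c) p - gtensor (dl c) (dl c) p) \<in> tensor_ideal I"
    using tensor_ideal.zero by simp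
qed

theorem proposition3p7:
  fixes I :: "('a::{finite, ab_group_add} \<Rightarrow> 'r::comm_ring_1) set"
  assumes "is_local TYPE('r)"
    and "hopf_ideal I"
    and "of_nat (card (UNIV :: 'a set)) dvd (1::'r)"
  shows "bij_betw (reduce I) (grouplikes_H I) (grouplikes_Hk I)"
proof -
  note loc = assms(1) and hopf = assms(2) and Ninv = assms(3)
  note sK = submod_K[OF loc hopf]
  note sI = smI[OF loc hopf]
  have key: "\<exists>c. (\<lambda>a. f a - dl c a) \<in> I"
    if cu: "counit f = 1" and gl: "(\<lambda>p. comult f p - gtensor f f p) \<in> tensor_ideal I" for f
  proof -
    have "\<exists>c. (\<lambda>a. f a - dl c a) \<in> ext_ideal I"
      by (rule field_part[OF loc hopf _ gl submod_zero[OF smM[OF loc hopf]]])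
         (simp_all add: cu m_zero[OF loc])
    then obtain c where "(\<lambda>a. f a - dl c a) \<in> ext_ideal I" by blast
    then show ?thesis using lift[OF loc hopf Ninv cu gl] by blast
  qed
  show ?thesis unfolding bij_betw_def
  proof (intro conjI)
    show "inj_on (reduce I) (grouplikes_H I)"
    proof (rule inj_onI)
      fix x y assume x: "x \<in> grouplikes_H I" and y: "y \<in> grouplikes_H I" and e: "reduce I x = reduce I y"
      obtain f where f: "x = cls I f" "counit f = 1" "(\<lambda>p. comult f p - gtensor f f p) \<in> tensor_ideal I"
        using x unfolding grouplikes_H_def by blast
      obtain g where g: "y = cls I g" "counit g = 1" "(\<lambda>p. comult g p - gtensor g g p) \<in> tensor_ideal I"
        using y unfolding grouplikes_H_def by blast
      have fg: "(\<lambda>a. f a - g a) \<in> ext_ideal I"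
        using e unfolding f(1) g(1) reduce_cls[OF loc hopf] cls_eq[OF sK] .
      obtain c where c: "(\<lambda>a. f a - dl c a) \<in> I" using key[OF f(2,3)] by blast
      obtain d where d: "(\<lambda>a. g a - dl d a) \<in> I" using key[OF g(2,3)] by blast
      have "(\<lambda>a. dl c a - dl d a) \<in> ext_ideal I"
      proof (rule submod_eq[OF submod_add[OF sK submod_diff[OF sK fg I_K[OF loc hopf c]] I_K[OF loc hopf d]]])
        fix a show "dl c a - dl d a = f a - g a - (f a - dl c a) + (g a - dl d a)" by simp
      qed
      then have cd: "(\<lambda>a. dl c a - dl d a) \<in> I"
        using lift[OF loc hopf Ninv dl_grouplike] by blast
      have "(\<lambda>a. f a - g a) \<in> I"
      proof (rule submod_eq[OF submod_diff[OF sI submod_add[OF sI c cd] d]])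
        fix a show "f a - g a = f a - dl c a + (dl c a - dl d a) - (g a - dl d a)" by simp
      qed
      then show "x = y" unfolding f(1) g(1) cls_eq[OF sI] .
    qed
  next
    show "reduce I ` grouplikes_H I = grouplikes_Hk I"
    proof (intro set_eqI iffI)
      fix y assume "y \<in> reduce I ` grouplikes_H I"
      then obtain f where f: "y = reduce I (cls I f)" "counit f = 1" "(\<lambda>p. comult f p - gtensor f f p) \<in> tensor_ideal I"
        unfolding grouplikes_H_def by blast
      have "y = cls (ext_ideal I) f" using f(1) reduce_cls[OF loc hopf] by simp
      moreover have cf: "counit f - 1 \<in> maxideal" using f(2) m_zero[OF loc] by simp
      moreover have "\<exists>t u. t \<in> tensor_ideal I \<and> (\<forall>p. u p \<in> maxideal) \<and> (\<forall>p. comult f p - gtensor f f p = t p + u p)"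
        by (rule exI[where x="\<lambda>p. comult f p - gtensor f f p"], rule exI[where x="\<lambda>_. 0"])
           (simp add: f(3) m_zero[OF loc])
      ultimately show "y \<in> grouplikes_Hk I" unfolding grouplikes_Hk_def by blast
    next
      fix y assume "y \<in> grouplikes_Hk I"
      then obtain f t u where f: "y = cls (ext_ideal I) f" "counit f - 1 \<in> maxideal" "t \<in> tensor_ideal I"
        "\<forall>p. u p \<in> maxideal" "\<forall>p. comult f p - gtensor f f p = t p + u p"
        unfolding grouplikes_Hk_def by blast
      have um: "u \<in> mv" using f(4) unfolding mv_def by simp
      obtain c where c: "(\<lambda>a. f a - dl c a) \<in> ext_ideal I"
        using field_part[OF loc hopf f(2) f(3) um f(5)] by blast
      have "y = cls (ext_ideal I) (dl c)" using f(1) c cls_eq[OF sK] by blast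
      also have "\<dots> = reduce I (cls I (dl c))" using reduce_cls[OF loc hopf] by simp
      finally have "y = reduce I (cls I (dl c))" .
      moreover have "cls I (dl c) \<in> grouplikes_H I"
        unfolding grouplikes_H_def using dl_grouplike(1)[where c=c] dl_grouplike(2)[where c=c and I=I] by blast
      ultimately show "y \<in> reduce I ` grouplikes_H I" by blast
    qed
  qed
qed

end
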